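(* Let $\mathcal G=(V,E,r)$ be a non-null graph, let $m$ be the maximal order (number of vertices) of a connected component of $\mathcal G$, and let $D$ be the maximal vertex degree of $\mathcal G$. (1) For every real $r>D/2$, the function $\sigma_r\colon\mathbf A(\mathcal G)\to\mathbb R_{\ge0}$, $\sigma_r(a)=r\sum_{v\in V}a(v)-\sum_{e\in E}a(e)$, is a semi-length function. (2) $\rho(\mathbf A(\mathcal G))\le m-\frac{m-1}{D}$. (3) If $\mathcal G$ is simple, then $\rho(\mathbf A(\mathcal G))\le m-2+\frac{2}{m}$.
   Context: A graph $\mathcal G=(V,E,r)$ consists of a finite vertex set $V$, a finite edge set $E$ disjoint from $V$, and a map $r$ assigning to each edge a two-element subset of $V$; multiple edges allowed, no loops; simple means no two edges have the same pair of incident vertices. An agglomeration on $\mathcal G$ is a function $a\colon V\cup E\to\mathbb N_0$ with $a(v)\ge a(e)$ whenever $v$ is incident with $e$; $\mathbf A(\mathcal G)$ is the monoid of agglomerations under pointwise addition. A semi-length function is a monoid homomorphism $\sigma\colon\mathbf A(\mathcal G)\to(\mathbb R_{\ge0},+)$ with $\sigma(a)=0$ iff $a=0$. For a reduced atomic monoid $H$, $\mathsf L(a)$ is the set of $k$ such that $a$ is a sum of $k$ atoms, $\rho(a)=\sup\mathsf L(a)/\min\mathsf L(a)$ for $a\ne0$, $\rho(0)=1$, and $\rho(H)=\sup_{a\in H}\rho(a)$. *)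

theory Defs
  imports Complex_Main "HOL-Library.Function_Algebras" "HOL-Library.Extended_Real"
begin

text \<open>A graph (V,E,r): vertices of type 'v, edges of type 'e (so V and E are disjoint),
  and ends e is the two-element set of vertices incident with e.\<close>
definition graph :: "'v set \<Rightarrow> 'e set \<Rightarrow> ('e \<Rightarrow> 'v set) \<Rightarrow> bool" where
  "graph V E ends \<longleftrightarrow> finite V \<and> finite E \<and> (\<forall>e\<in>E. ends e \<subseteq> V \<and> card (ends e) = 2)"

definition simple_graph :: "'v set \<Rightarrow> 'e set \<Rightarrow> ('e \<Rightarrow> 'v set) \<Rightarrow> bool" where
  "simple_graph V E ends \<longleftrightarrow> graph V E ends \<and> inj_on ends E"

definition degree :: "'e set \<Rightarrow> ('e \<Rightarrow> 'v set) \<Rightarrow> 'v \<Rightarrow> nat" where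
  "degree E ends v = card {e\<in>E. v \<in> ends e}"

definition max_degree :: "'v set \<Rightarrow> 'e set \<Rightarrow> ('e \<Rightarrow> 'v set) \<Rightarrow> nat" where
  "max_degree V E ends = Max (degree E ends ` V)"

definition adjacent :: "'v set \<Rightarrow> 'e set \<Rightarrow> ('e \<Rightarrow> 'v set) \<Rightarrow> 'v \<Rightarrow> 'v \<Rightarrow> bool" where
  "adjacent V E ends u w \<longleftrightarrow> u \<in> V \<and> w \<in> V \<and> (\<exists>e\<in>E. ends e = {u, w})"

definition component :: "'v set \<Rightarrow> 'e set \<Rightarrow> ('e \<Rightarrow> 'v set) \<Rightarrow> 'v \<Rightarrow> 'v set" where
  "component V E ends v = {w\<in>V. (adjacent V E ends)\<^sup>*\<^sup>* v w}"

definition max_component_order :: "'v set \<Rightarrow> 'e set \<Rightarrow> ('e \<Rightarrow> 'v set) \<Rightarrow> nat" where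
  "max_component_order V E ends = Max ((\<lambda>v. card (component V E ends v)) ` V)"

text \<open>Agglomerations: functions on the disjoint union V \<union> E (as 'v + 'e), zero outside it.\<close>
definition agglomerations :: "'v set \<Rightarrow> 'e set \<Rightarrow> ('e \<Rightarrow> 'v set) \<Rightarrow> ('v + 'e \<Rightarrow> nat) set" where
  "agglomerations V E ends =
     {a. (\<forall>x. x \<notin> Inl ` V \<union> Inr ` E \<longrightarrow> a x = 0) \<and>
         (\<forall>e\<in>E. \<forall>v\<in>ends e. a (Inr e) \<le> a (Inl v))}"

definition semi_length :: "'a::comm_monoid_add set \<Rightarrow> ('a \<Rightarrow> real) \<Rightarrow> bool" where
  "semi_length H \<sigma> \<longleftrightarrow>
     (\<forall>a\<in>H. \<sigma> a \<ge> 0) \<and> \<sigma> 0 = 0 \<and>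
     (\<forall>a\<in>H. \<forall>b\<in>H. \<sigma> (a + b) = \<sigma> a + \<sigma> b) \<and>
     (\<forall>a\<in>H. \<sigma> a = 0 \<longleftrightarrow> a = 0)"

definition sigma_r :: "'v set \<Rightarrow> 'e set \<Rightarrow> real \<Rightarrow> ('v + 'e \<Rightarrow> nat) \<Rightarrow> real" where
  "sigma_r V E t a = t * (\<Sum>v\<in>V. real (a (Inl v))) - (\<Sum>e\<in>E. real (a (Inr e)))"

definition is_atom :: "'a::comm_monoid_add set \<Rightarrow> 'a \<Rightarrow> bool" where
  "is_atom H a \<longleftrightarrow> a \<in> H \<and> a \<noteq> 0 \<and> (\<forall>b\<in>H. \<forall>c\<in>H. a = b + c \<longrightarrow> b = 0 \<or> c = 0)"

definition lengths :: "'a::comm_monoid_add set \<Rightarrow> 'a \<Rightarrow> nat set" where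
  "lengths H a = {k. \<exists>f. (\<forall>i<k. is_atom H (f i)) \<and> a = (\<Sum>i<k. f i)}"

definition elasticity_elem :: "'a::comm_monoid_add set \<Rightarrow> 'a \<Rightarrow> ereal" where
  "elasticity_elem H a =
     (if a = 0 then 1
      else (SUP k\<in>lengths H a. ereal (real k)) / ereal (real (Min (lengths H a))))"

definition elasticity :: "'a::comm_monoid_add set \<Rightarrow> ereal" where
  "elasticity H = (SUP a\<in>H. elasticity_elem H a)"

end

theory Submission
  imports Defs
begin

definition frel :: "'e set \<Rightarrow> ('e \<Rightarrow> 'v set) \<Rightarrow> ('v + 'e \<Rightarrow> nat) \<Rightarrow> 'v \<Rightarrow> 'v \<Rightarrow> bool" where
  "frel E ends a u w \<longleftrightarrow> (\<exists>e\<in>E. 1 \<le> a (Inr e) \<and> ends e = {u, w})"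

lemma card2_eq: "card A = 2 \<Longrightarrow> w \<in> A \<Longrightarrow> v \<in> A \<Longrightarrow> w \<noteq> v \<Longrightarrow> A = {w, v}"
  by (auto simp: card_2_iff)

lemma tree_bound:
  fixes R :: "'v \<Rightarrow> 'v \<Rightarrow> bool" and ends :: "'e \<Rightarrow> 'v set"
  assumes finF: "finite F" and finS: "finite S" and v0: "v0 \<in> S"
    and reach: "\<And>u. u \<in> S \<Longrightarrow> (R\<^sup>*\<^sup>*) v0 u"
    and edge: "\<And>u w. R u w \<Longrightarrow> \<exists>e\<in>F. ends e = {u, w}"
  shows "card S \<le> card F + 1"
proof -
  define d where "d u = (LEAST n. (R ^^ n) v0 u)" for u
  have step: "\<exists>e w. e \<in> F \<and> ends e = {w, u} \<and> d w < d u" if uS: "u \<in> S" and uv: "u \<noteq> v0" for u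
  proof -
    obtain n where "(R ^^ n) v0 u" using rtranclp_imp_relpowp[OF reach[OF uS]] by blast
    then have dn: "(R ^^ (d u)) v0 u" unfolding d_def by (rule LeastI)
    have "d u \<noteq> 0" using dn uv by (cases "d u") auto
    then obtain k where k: "d u = Suc k" by (cases "d u") auto
    from dn[unfolded k] obtain w where w1: "(R ^^ k) v0 w" and w2: "R w u" by (rule relpowp_Suc_E)
    have "d w \<le> k" unfolding d_def using w1 by (rule Least_le)
    moreover obtain e where "e \<in> F" "ends e = {w, u}" using edge[OF w2] by blast
    ultimately show ?thesis using k by (intro exI[of _ e] exI[of _ w]) auto
  qed
  define p where "p u = (SOME e. \<exists>w. e \<in> F \<and> ends e = {w, u} \<and> d w < d u)" for u
  have p: "p u \<in> F \<and> (\<exists>w. ends (p u) = {w, u} \<and> d w < d u)" if "u \<in> S - {v0}" for u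
  proof -
    have "\<exists>e. \<exists>w. e \<in> F \<and> ends e = {w, u} \<and> d w < d u" using step that by blast
    from someI_ex[OF this] show ?thesis unfolding p_def by blast
  qed
  have "inj_on p (S - {v0})"
  proof (rule inj_onI)
    fix u1 u2 assume u1: "u1 \<in> S - {v0}" and u2: "u2 \<in> S - {v0}" and eq: "p u1 = p u2"
    obtain w1 where w1: "ends (p u1) = {w1, u1}" "d w1 < d u1" using p[OF u1] by blast
    obtain w2 where w2: "ends (p u2) = {w2, u2}" "d w2 < d u2" using p[OF u2] by blast
    show "u1 = u2"
    proof (rule ccontr)
      assume ne: "u1 \<noteq> u2"
      have "{w1, u1} = {w2, u2}" using w1 w2 eq by simp
      then have "u1 = w2" "u2 = w1" using ne by (auto simp: doubleton_eq_iff)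
      then show False using w1 w2 by simp
    qed
  qed
  moreover have "p ` (S - {v0}) \<subseteq> F" using p by blast
  ultimately have "card (S - {v0}) \<le> card F" using card_inj_on_le finF by blast
  then show ?thesis using v0 finS by (simp add: card_Diff_singleton)
qed


lemma agg_mem: "a \<in> agglomerations V E ends \<longleftrightarrow>
   (\<forall>x. x \<notin> Inl ` V \<union> Inr ` E \<longrightarrow> a x = 0) \<and> (\<forall>e\<in>E. \<forall>v\<in>ends e. a (Inr e) \<le> a (Inl v))"
  unfolding agglomerations_def by simp

lemma atom_le1:
  assumes at: "is_atom (agglomerations V E ends) a"
  shows "a x \<le> 1"
proof (rule ccontr)
  let ?H = "agglomerations V E ends"
  assume nx: "\<not> a x \<le> 1"
  have aH: "a \<in> ?H" and a0: "a \<noteq> 0" and ind: "\<And>b c. b \<in> ?H \<Longrightarrow> c \<in> ?H \<Longrightarrow> a = b + c \<Longrightarrow> b = 0 \<or> c = 0"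
    using at unfolding is_atom_def by auto
  define b where "b = (\<lambda>y. if 1 \<le> a y then 1 else 0::nat)"
  define c where "c = (\<lambda>y. a y - 1)"
  have "a = b + c" by (rule ext) (simp add: b_def c_def)
  moreover have "b \<in> ?H" using aH unfolding agg_mem b_def
    by (auto, fastforce)
  moreover have "c \<in> ?H" using aH unfolding agg_mem c_def by (auto intro: diff_le_mono)
  moreover have "b \<noteq> 0"
  proof
    assume "b = 0"
    then have "a y = 0" for y using fun_cong[of b 0 y] unfolding b_def by (auto split: if_splits)
    then show False using a0 by auto
  qed
  moreover have "c \<noteq> 0"
  proof
    assume "c = 0"
    then have "c x = 0" by simp
    then show False using nx unfolding c_def by simp
  qed
  ultimately show False using ind by blast
qed

lemma atom_conn:
  assumes g: "graph V E ends" and at: "is_atom (agglomerations V E ends) a"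
    and v0: "1 \<le> a (Inl v0)" and u: "1 \<le> a (Inl u)"
  shows "(frel E ends a)\<^sup>*\<^sup>* v0 u"
proof (rule ccontr)
  let ?H = "agglomerations V E ends"
  assume nu: "\<not> (frel E ends a)\<^sup>*\<^sup>* v0 u"
  have aH: "a \<in> ?H" and ind: "\<And>b c. b \<in> ?H \<Longrightarrow> c \<in> ?H \<Longrightarrow> a = b + c \<Longrightarrow> b = 0 \<or> c = 0"
    using at unfolding is_atom_def by auto
  have ends2: "\<And>e. e \<in> E \<Longrightarrow> card (ends e) = 2" using g unfolding graph_def by auto
  define R where "R = {u. (frel E ends a)\<^sup>*\<^sup>* v0 u}"
  define X where "X = Inl ` R \<union> Inr ` {e. \<exists>w\<in>ends e. w \<in> R}"
  define b where "b = (\<lambda>y. if y \<in> X then a y else 0)"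
  define c where "c = (\<lambda>y. if y \<in> X then 0 else a y)"
  have "a = b + c" by (rule ext) (simp add: b_def c_def)
  moreover have "b \<in> ?H"
    unfolding agg_mem
  proof (intro conjI allI ballI impI)
    fix x assume "x \<notin> Inl ` V \<union> Inr ` E" then show "b x = 0" using aH unfolding agg_mem b_def by auto
  next
    fix e v assume e: "e \<in> E" and v: "v \<in> ends e"
    show "b (Inr e) \<le> b (Inl v)"
    proof (cases "\<exists>w\<in>ends e. w \<in> R")
      case True
      then obtain w where w: "w \<in> ends e" "w \<in> R" by blast
      show ?thesis
      proof (cases "a (Inr e) = 0")
        case True then show ?thesis unfolding b_def by simp
      next
        case False
        have "v \<in> R"
        proof (cases "w = v")
          case True then show ?thesis using w by simp
        next
          case False
          have "ends e = {w, v}" using card2_eq[OF ends2[OF e] w(1) v False] .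
          then have "frel E ends a w v" unfolding frel_def using e \<open>a (Inr e) \<noteq> 0\<close> by (intro bexI[of _ e]) auto
          then show ?thesis using w(2) unfolding R_def by (auto intro: rtranclp.rtrancl_into_rtrancl)
        qed
        then show ?thesis using aH e v unfolding b_def X_def agg_mem using True by auto
      qed
    next
      case False
      then show ?thesis unfolding b_def X_def by auto
    qed
  qed
  moreover have "c \<in> ?H"
    unfolding agg_mem
  proof (intro conjI allI ballI impI)
    fix x assume "x \<notin> Inl ` V \<union> Inr ` E" then show "c x = 0" using aH unfolding agg_mem c_def by auto
  next
    fix e v assume e: "e \<in> E" and v: "v \<in> ends e"
    show "c (Inr e) \<le> c (Inl v)"
    proof (cases "\<exists>w\<in>ends e. w \<in> R")
      case True
      then show ?thesis unfolding c_def X_def by auto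
    next
      case False
      then have "v \<notin> R" using v by blast
      then show ?thesis using False aH e v unfolding c_def X_def agg_mem by auto
    qed
  qed
  moreover have "b \<noteq> 0"
  proof
    assume "b = 0"
    then have "b (Inl v0) = 0" by simp
    moreover have "v0 \<in> R" unfolding R_def by simp
    ultimately show False using v0 unfolding b_def X_def by auto
  qed
  moreover have "c \<noteq> 0"
  proof
    assume "c = 0"
    then have "c (Inl u) = 0" by simp
    moreover have "u \<notin> R" using nu unfolding R_def by simp
    ultimately show False using u unfolding c_def X_def by (auto simp: image_iff split: if_splits)
  qed
  ultimately show False using ind by blast
qed


lemma comp_le_m:
  assumes g: "graph V E ends" and v: "v \<in> V"
  shows "card (component V E ends v) \<le> max_component_order V E ends"
proof -
  have "finite V" using g unfolding graph_def by auto
  then show ?thesis unfolding max_component_order_def using v by (intro Max_ge) auto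
qed

lemma m_ge1:
  assumes g: "graph V E ends" and v: "V \<noteq> {}"
  shows "1 \<le> max_component_order V E ends"
proof -
  obtain v where v: "v \<in> V" using v by blast
  have fin: "finite V" using g unfolding graph_def by auto
  have "v \<in> component V E ends v" using v unfolding component_def by simp
  moreover have "finite (component V E ends v)" using fin unfolding component_def by simp
  ultimately have "1 \<le> card (component V E ends v)" by (metis One_nat_def Suc_leI card_gt_0_iff empty_iff)
  then show ?thesis using comp_le_m[OF g v] by simp
qed

lemma atom_struct:
  assumes g: "graph V E ends" and at: "is_atom (agglomerations V E ends) a"
  shows "\<exists>S F. S \<subseteq> V \<and> F \<subseteq> E \<and> S \<noteq> {} \<and>
     (\<Sum>v\<in>V. real (a (Inl v))) = real (card S) \<and> (\<Sum>e\<in>E. real (a (Inr e))) = real (card F) \<and>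
     card S \<le> card F + 1 \<and> card S \<le> max_component_order V E ends \<and> (\<forall>e\<in>F. ends e \<subseteq> S)"
proof -
  let ?H = "agglomerations V E ends"
  have aH: "a \<in> ?H" and a0: "a \<noteq> 0" using at unfolding is_atom_def by auto
  have finV: "finite V" and finE: "finite E" and endsV: "\<And>e. e \<in> E \<Longrightarrow> ends e \<subseteq> V"
    and ends2: "\<And>e. e \<in> E \<Longrightarrow> card (ends e) = 2" using g unfolding graph_def by auto
  have le1: "\<And>x. a x \<le> 1" using atom_le1[OF at] .
  define S where "S = {v\<in>V. a (Inl v) = 1}"
  define F where "F = {e\<in>E. a (Inr e) = 1}"
  have r01: "real (a x) = (if a x = 1 then 1 else 0)" for x using le1[of x] by (cases "a x") auto
  have sumV: "(\<Sum>v\<in>V. real (a (Inl v))) = real (card S)"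
    unfolding S_def using finV by (simp add: r01 sum.inter_filter[symmetric])
  have sumE: "(\<Sum>e\<in>E. real (a (Inr e))) = real (card F)"
    unfolding F_def using finE by (simp add: r01 sum.inter_filter[symmetric])
  have endsS: "\<forall>e\<in>F. ends e \<subseteq> S"
  proof (intro ballI subsetI)
    fix e v assume e: "e \<in> F" and v: "v \<in> ends e"
    have "1 \<le> a (Inl v)" using aH e v unfolding agg_mem F_def by force
    then show "v \<in> S" using le1[of "Inl v"] endsV e v unfolding S_def F_def by auto
  qed
  obtain y where y: "a y \<noteq> 0" using a0 by (metis zero_fun_def ext)
  obtain v0 where v0: "v0 \<in> S"
  proof (cases y)
    case (Inl v)
    then have "v \<in> V" using aH y unfolding agg_mem by auto
    then show ?thesis using that[of v] y le1[of y] Inl unfolding S_def by auto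
  next
    case (Inr e)
    then have e: "e \<in> E" using aH y unfolding agg_mem by auto
    then have "e \<in> F" using y le1[of y] Inr unfolding F_def by auto
    moreover obtain v where "v \<in> ends e" using ends2[OF e] by (metis card.empty ex_in_conv zero_neq_numeral)
    ultimately show ?thesis using that endsS by blast
  qed
  have finS: "finite S" and finF: "finite F" using finV finE unfolding S_def F_def by auto
  have reach: "(frel E ends a)\<^sup>*\<^sup>* v0 u" if "u \<in> S" for u
    using atom_conn[OF g at] v0 that unfolding S_def by auto
  have tree: "card S \<le> card F + 1"
  proof (rule tree_bound[OF finF finS v0 reach])
    fix u w assume "frel E ends a u w"
    then obtain e where "e \<in> E" "1 \<le> a (Inr e)" "ends e = {u, w}" unfolding frel_def by blast
    then show "\<exists>e\<in>F. ends e = {u, w}" using le1[of "Inr e"] unfolding F_def by (intro bexI[of _ e]) auto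
  qed auto
  have "frel E ends a \<le> adjacent V E ends"
  proof (intro le_funI le_boolI)
    fix u w assume "frel E ends a u w"
    then obtain e where "e \<in> E" "ends e = {u, w}" unfolding frel_def by blast
    then show "adjacent V E ends u w" unfolding adjacent_def using endsV by blast
  qed
  then have "S \<subseteq> component V E ends v0"
    using reach rtranclp_mono unfolding component_def S_def by blast
  moreover have "finite (component V E ends v0)" using finV unfolding component_def by simp
  ultimately have "card S \<le> card (component V E ends v0)" by (rule card_mono[rotated])
  also have "\<dots> \<le> max_component_order V E ends" using comp_le_m[OF g] v0 unfolding S_def by auto
  finally have "card S \<le> max_component_order V E ends" .
  then show ?thesis using sumV sumE tree endsS v0
    by (intro exI[of _ S] exI[of _ F]) (auto simp: S_def F_def)
qed

lemma handshake:
  assumes g: "graph V E ends" and aH: "a \<in> agglomerations V E ends"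
  shows "2 * (\<Sum>e\<in>E. real (a (Inr e))) \<le> real (max_degree V E ends) * (\<Sum>v\<in>V. real (a (Inl v)))"
proof -
  have finV: "finite V" and finE: "finite E" and endsV: "\<And>e. e \<in> E \<Longrightarrow> ends e \<subseteq> V"
    and ends2: "\<And>e. e \<in> E \<Longrightarrow> card (ends e) = 2" using g unfolding graph_def by auto
  let ?D = "max_degree V E ends"
  have degD: "degree E ends v \<le> ?D" if "v \<in> V" for v
    unfolding max_degree_def using finV that by (intro Max_ge) auto
  have "2 * (\<Sum>e\<in>E. real (a (Inr e))) = (\<Sum>e\<in>E. 2 * real (a (Inr e)))" by (simp add: sum_distrib_left)
  also have "\<dots> \<le> (\<Sum>e\<in>E. \<Sum>v\<in>V. if v \<in> ends e then real (a (Inl v)) else 0)"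
  proof (rule sum_mono)
    fix e assume e: "e \<in> E"
    have "(\<Sum>v\<in>V. if v \<in> ends e then real (a (Inl v)) else 0) = (\<Sum>v\<in>{v\<in>V. v \<in> ends e}. real (a (Inl v)))"
      using finV by (simp add: sum.inter_filter)
    also have "{v\<in>V. v \<in> ends e} = ends e" using endsV[OF e] by auto
    finally have eq: "(\<Sum>v\<in>V. if v \<in> ends e then real (a (Inl v)) else 0) = (\<Sum>v\<in>ends e. real (a (Inl v)))" .
    have "real (card (ends e)) * real (a (Inr e)) \<le> (\<Sum>v\<in>ends e. real (a (Inl v)))"
      by (rule sum_bounded_below) (use aH e in \<open>auto simp: agg_mem\<close>)
    then show "2 * real (a (Inr e)) \<le> (\<Sum>v\<in>V. if v \<in> ends e then real (a (Inl v)) else 0)"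
      using eq ends2[OF e] by simp
  qed
  also have "\<dots> = (\<Sum>v\<in>V. \<Sum>e\<in>E. if v \<in> ends e then real (a (Inl v)) else 0)" by (rule sum.swap)
  also have "\<dots> = (\<Sum>v\<in>V. real (a (Inl v)) * real (degree E ends v))"
  proof (rule sum.cong[OF refl])
    fix v assume "v \<in> V"
    have "(\<Sum>e\<in>E. if v \<in> ends e then real (a (Inl v)) else 0) = (\<Sum>e\<in>{e\<in>E. v \<in> ends e}. real (a (Inl v)))"
      using finE by (rule sum.inter_filter[symmetric])
    then show "(\<Sum>e\<in>E. if v \<in> ends e then real (a (Inl v)) else 0) = real (a (Inl v)) * real (degree E ends v)"
      unfolding degree_def by simp
  qed
  also have "\<dots> \<le> (\<Sum>v\<in>V. real (a (Inl v)) * real ?D)"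
    by (rule sum_mono) (use degD in \<open>auto intro: mult_left_mono\<close>)
  also have "\<dots> = real ?D * (\<Sum>v\<in>V. real (a (Inl v)))" by (simp add: sum_distrib_left mult.commute)
  finally show ?thesis .
qed

lemma sigma_add: "sigma_r V E t (a + b) = sigma_r V E t a + sigma_r V E t b"
  unfolding sigma_r_def by (simp add: sum.distrib algebra_simps)

lemma sigma_zero: "sigma_r V E t 0 = 0"
  unfolding sigma_r_def by simp


lemma elasticity_bound:
  fixes H :: "'a::comm_monoid_add set" and \<sigma> :: "'a \<Rightarrow> real"
  assumes add: "\<And>x y. \<sigma> (x + y) = \<sigma> x + \<sigma> y" and z: "\<sigma> 0 = 0"
    and lo: "0 < lo" and lohi: "lo \<le> hi"
    and atoms: "\<And>x. is_atom H x \<Longrightarrow> lo \<le> \<sigma> x \<and> \<sigma> x \<le> hi"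
  shows "elasticity H \<le> ereal (hi / lo)"
  unfolding elasticity_def
proof (rule SUP_least)
  fix a assume "a \<in> H"
  show "elasticity_elem H a \<le> ereal (hi / lo)"
  proof (cases "a = 0")
    case True
    have "1 \<le> hi / lo" using lo lohi by simp
    then show ?thesis using True by (simp add: elasticity_elem_def one_ereal_def)
  next
    case False
    let ?L = "lengths H a"
    have sums: "\<sigma> (\<Sum>i<k. f i) = (\<Sum>i<k. \<sigma> (f i))" for f and k :: nat by (induct k) (simp_all add: z add)
    have bnd: "real k * lo \<le> \<sigma> a \<and> \<sigma> a \<le> real k * hi \<and> 1 \<le> k" if kL: "k \<in> ?L" for k
    proof -
      obtain f where f: "\<forall>i<k. is_atom H (f i)" "a = (\<Sum>i<k. f i)"
        using kL unfolding lengths_def by blast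
      have sa: "\<sigma> a = (\<Sum>i<k. \<sigma> (f i))" using f(2) sums by simp
      have "real (card {..<k}) * lo \<le> (\<Sum>i<k. \<sigma> (f i))"
        by (rule sum_bounded_below) (use f(1) atoms in auto)
      moreover have "(\<Sum>i<k. \<sigma> (f i)) \<le> real (card {..<k}) * hi"
        by (rule sum_bounded_above) (use f(1) atoms in auto)
      moreover have "k \<noteq> 0" using f(2) False by (cases k) auto
      ultimately show ?thesis using sa by simp
    qed
    show ?thesis
    proof (cases "?L = {}")
      case True
      then show ?thesis using False lo lohi by (simp add: elasticity_elem_def divide_ereal_def bot_ereal_def)
    next
      case ne: False
      have "?L \<subseteq> {..nat (ceiling (\<sigma> a / lo))}"
      proof
        fix k assume "k \<in> ?L"
        then have "real k * lo \<le> \<sigma> a" using bnd by blast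
        then have "real k \<le> \<sigma> a / lo" using lo by (simp add: field_simps)
        then show "k \<in> {..nat (ceiling (\<sigma> a / lo))}" by (simp add: le_nat_iff le_ceiling_iff)
      qed
      then have fin: "finite ?L" by (rule finite_subset) simp
      define n where "n = Min ?L"
      have nL: "n \<in> ?L" unfolding n_def using fin ne by simp
      have n1: "1 \<le> n" and sn: "\<sigma> a \<le> real n * hi" using bnd[OF nL] by auto
      have "(SUP k\<in>?L. ereal (real k)) \<le> ereal (\<sigma> a / lo)"
      proof (rule SUP_least)
        fix k assume "k \<in> ?L"
        then have "real k * lo \<le> \<sigma> a" using bnd by blast
        then show "ereal (real k) \<le> ereal (\<sigma> a / lo)" using lo by (simp add: field_simps)
      qed
      then have "(SUP k\<in>?L. ereal (real k)) / ereal (real n) \<le> ereal (\<sigma> a / lo) / ereal (real n)"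
        using n1 by (intro ereal_divide_right_mono) auto
      also have "\<dots> = ereal (\<sigma> a / lo / real n)" using n1 by simp
      also have "\<dots> \<le> ereal (hi / lo)"
      proof -
        have "\<sigma> a / real n \<le> hi" using sn n1 by (simp add: field_simps)
        then have "\<sigma> a / real n / lo \<le> hi / lo" using lo by (intro divide_right_mono) auto
        moreover have "\<sigma> a / lo / real n = \<sigma> a / real n / lo" by (simp add: divide_divide_eq_left mult.commute)
        ultimately show ?thesis by (simp add: mult.commute)
      qed
      finally show ?thesis using False unfolding elasticity_elem_def n_def by simp
    qed
  qed
qed


theorem theorem4p13:
  fixes V :: "'v set" and E :: "'e set" and ends :: "'e \<Rightarrow> 'v set"
  assumes "graph V E ends" and "V \<noteq> {}"
  defines "m \<equiv> max_component_order V E ends" and "D \<equiv> max_degree V E ends"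
  shows "(\<forall>t::real. t > real D / 2 \<longrightarrow> semi_length (agglomerations V E ends) (sigma_r V E t))
       \<and> elasticity (agglomerations V E ends) \<le> ereal (real m - (real m - 1) / real D)
       \<and> (simple_graph V E ends \<longrightarrow>
            elasticity (agglomerations V E ends) \<le> ereal (real m - 2 + 2 / real m))"
proof -
  note g = assms(1)
  let ?H = "agglomerations V E ends"
  have finV: "finite V" and finE: "finite E" and endsV: "\<And>e. e \<in> E \<Longrightarrow> ends e \<subseteq> V"
    and ends2: "\<And>e. e \<in> E \<Longrightarrow> card (ends e) = 2" using g unfolding graph_def by auto
  have m1: "1 \<le> m" unfolding m_def using m_ge1[OF g assms(2)] .
  have hs: "\<And>a. a \<in> ?H \<Longrightarrow> 2 * (\<Sum>e\<in>E. real (a (Inr e))) \<le> real D * (\<Sum>v\<in>V. real (a (Inl v)))"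
    unfolding D_def using handshake[OF g] .
  have endne: "\<exists>v. v \<in> ends e" if "e \<in> E" for e
    using ends2[OF that] by (metis card.empty ex_in_conv zero_neq_numeral)
  have atomS: "\<exists>A B::nat. 1 \<le> A \<and> A \<le> m \<and> A \<le> B + 1 \<and> 2 * real B \<le> real D * real A \<and> (A = 1 \<longrightarrow> B = 0)
      \<and> (simple_graph V E ends \<longrightarrow> 2 * B \<le> A * (A - 1)) \<and> (D = 0 \<longrightarrow> B = 0)
      \<and> (\<forall>t. sigma_r V E t a = t * real A - real B)" if at: "is_atom ?H a" for a
  proof -
    obtain S F where SF: "S \<subseteq> V" "F \<subseteq> E" "S \<noteq> {}"
      "(\<Sum>v\<in>V. real (a (Inl v))) = real (card S)" "(\<Sum>e\<in>E. real (a (Inr e))) = real (card F)"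
      "card S \<le> card F + 1" "card S \<le> m" "\<forall>e\<in>F. ends e \<subseteq> S"
      using atom_struct[OF g at] unfolding m_def by blast
    have aH: "a \<in> ?H" using at unfolding is_atom_def by auto
    have finS: "finite S" and finF: "finite F" using SF(1,2) finV finE by (auto intro: finite_subset)
    have A1: "1 \<le> card S" using finS SF(3) by (simp add: Suc_le_eq card_gt_0_iff)
    have hsA: "2 * real (card F) \<le> real D * real (card S)" using hs[OF aH] SF by simp
    have B0: "card F = 0" if "card S = 1"
    proof (rule ccontr)
      assume "card F \<noteq> 0"
      then obtain e where e: "e \<in> F" using finF by fastforce
      have "card (ends e) \<le> card S" using SF(8) e finS by (intro card_mono) auto
      then show False using ends2[of e] e SF(2) that by auto
    qed
    have simp: "2 * card F \<le> card S * (card S - 1)" if sg: "simple_graph V E ends"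
    proof -
      have inj: "inj_on ends F" using sg SF(2) unfolding simple_graph_def by (auto intro: inj_on_subset)
      have sub: "ends ` F \<subseteq> {X. X \<subseteq> S \<and> card X = 2}" using SF(2,8) ends2 by auto
      have fin: "finite {X. X \<subseteq> S \<and> card X = 2}" using finS by simp
      have "card F \<le> card {X. X \<subseteq> S \<and> card X = 2}" using card_inj_on_le[OF inj sub fin] .
      also have "\<dots> = card S choose 2" using n_subsets[OF finS] .
      finally show ?thesis by (simp add: choose_two)
    qed
    have D0: "card F = 0" if "D = 0"
    proof (rule ccontr)
      assume "card F \<noteq> 0"
      then obtain e where e: "e \<in> F" using finF by fastforce
      then have eE: "e \<in> E" using SF(2) by auto
      obtain v where v: "v \<in> ends e" using endne[OF eE] by blast
      have "e \<in> {e\<in>E. v \<in> ends e}" using eE v by simp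
      then have "1 \<le> degree E ends v" unfolding degree_def using finE
        by (metis (no_types, lifting) One_nat_def Suc_leI card_gt_0_iff empty_iff finite_subset mem_Collect_eq subsetI)
      moreover have "degree E ends v \<le> D" unfolding D_def max_degree_def
        using finV endsV[OF eE] v by (intro Max_ge) auto
      ultimately show False using that by simp
    qed
    have sig: "sigma_r V E t a = t * real (card S) - real (card F)" for t
      unfolding sigma_r_def using SF by simp
    show ?thesis
      by (rule exI[of _ "card S"], rule exI[of _ "card F"]) (use A1 SF hsA B0 simp D0 sig in auto)
  qed
  have part1: "\<forall>t::real. t > real D / 2 \<longrightarrow> semi_length ?H (sigma_r V E t)"
  proof (intro allI impI)
    fix t :: real assume t: "t > real D / 2"
    have key: "(t - real D / 2) * (\<Sum>v\<in>V. real (a (Inl v))) \<le> sigma_r V E t a" if "a \<in> ?H" for a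
      using hs[OF that] unfolding sigma_r_def by (simp add: algebra_simps)
    have pos: "0 \<le> (t - real D / 2) * (\<Sum>v\<in>V. real (a (Inl v)))" for a
      using t by (intro mult_nonneg_nonneg sum_nonneg) auto
    show "semi_length ?H (sigma_r V E t)"
      unfolding semi_length_def
    proof (intro conjI ballI)
      fix a assume "a \<in> ?H" then show "0 \<le> sigma_r V E t a" using key[of a] pos[of a] by linarith
    next
      show "sigma_r V E t 0 = 0" by (rule sigma_zero)
    next
      fix a b show "sigma_r V E t (a + b) = sigma_r V E t a + sigma_r V E t b" by (rule sigma_add)
    next
      fix a assume aH: "a \<in> ?H"
      show "(sigma_r V E t a = 0) = (a = 0)"
      proof
        assume s0: "sigma_r V E t a = 0"
        have "(t - real D / 2) * (\<Sum>v\<in>V. real (a (Inl v))) \<le> 0" using key[OF aH] s0 by simp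
        moreover have "0 \<le> (\<Sum>v\<in>V. real (a (Inl v)))" by (intro sum_nonneg) auto
        moreover have "t - real D / 2 > 0" using t by simp
        ultimately have "(\<Sum>v\<in>V. real (a (Inl v))) = 0" by (simp add: mult_le_0_iff)
        then have av: "\<forall>v\<in>V. a (Inl v) = 0" using finV by (simp add: sum_nonneg_eq_0_iff)
        show "a = 0"
        proof (rule ext)
          fix x show "a x = 0 x"
          proof (cases x)
            case (Inl v) then show ?thesis using av aH unfolding agg_mem by (cases "v \<in> V") auto
          next
            case (Inr e)
            show ?thesis
            proof (cases "e \<in> E")
              case True
              obtain v where v: "v \<in> ends e" using endne[OF True] by blast
              then have "a (Inr e) \<le> a (Inl v)" using aH True unfolding agg_mem by auto
              then show ?thesis using av v endsV[OF True] Inr by auto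
            next
              case False then show ?thesis using aH Inr unfolding agg_mem by auto
            qed
          qed
        qed
      next
        assume "a = 0" then show "sigma_r V E t a = 0" by (simp add: sigma_zero)
      qed
    qed
  qed
  have part2: "elasticity ?H \<le> ereal (real m - (real m - 1) / real D)"
  proof (cases "D = 0")
    case True
    have "elasticity ?H \<le> ereal (real m / 1)"
    proof (rule elasticity_bound[where \<sigma> = "sigma_r V E 1"])
      fix x assume "is_atom ?H x"
      then obtain A B where "1 \<le> A" "A \<le> m" "D = 0 \<longrightarrow> B = 0" "\<forall>t. sigma_r V E t x = t * real A - real B"
        using atomS by blast
      then show "1 \<le> sigma_r V E 1 x \<and> sigma_r V E 1 x \<le> real m" using True by simp
    qed (use m1 in \<open>simp_all add: sigma_add sigma_zero\<close>)
    then show ?thesis using True by simp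
  next
    case False
    then have D1: "1 \<le> real D" by simp
    have "elasticity ?H \<le> ereal ((real D * real m - (real m - 1)) / real D)"
    proof (rule elasticity_bound[where \<sigma> = "sigma_r V E (real D)"])
      fix x assume "is_atom ?H x"
      then obtain A B where AB: "1 \<le> A" "A \<le> m" "A \<le> B + 1" "2 * real B \<le> real D * real A" "A = 1 \<longrightarrow> B = 0"
        "\<forall>t. sigma_r V E t x = t * real A - real B"
        using atomS by blast
      have lo: "real D \<le> real D * real A - real B"
      proof (cases "A = 1")
        case True then show ?thesis using AB by simp
      next
        case False
        then have "2 \<le> real A" using AB by simp
        then have "2 * real D \<le> real D * real A" using D1 by (metis mult.commute mult_left_mono of_nat_0_le_iff)
        then show ?thesis using AB(4) by simp
      qed
      have "0 \<le> (real D - 1) * (real m - real A)" using D1 AB by (intro mult_nonneg_nonneg) auto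
      then have hi: "real D * real A - real B \<le> real D * real m - (real m - 1)"
        using AB(3) by (simp add: algebra_simps)
      show "real D \<le> sigma_r V E (real D) x \<and> sigma_r V E (real D) x \<le> real D * real m - (real m - 1)"
        using lo hi AB(6) by simp
    next
      have "0 \<le> (real D - 1) * (real m - 1)" using D1 m1 by (intro mult_nonneg_nonneg) auto
      then show "real D \<le> real D * real m - (real m - 1)" by (simp add: algebra_simps)
    qed (use D1 in \<open>simp_all add: sigma_add sigma_zero\<close>)
    moreover have "(real D * real m - (real m - 1)) / real D = real m - (real m - 1) / real D"
      using D1 by (simp add: field_simps)
    ultimately show ?thesis by simp
  qed
  have part3: "elasticity ?H \<le> ereal (real m - 2 + 2 / real m)" if sg: "simple_graph V E ends"
  proof -
    have mr: "1 \<le> real m" using m1 by simp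
    have "elasticity ?H \<le> ereal ((real m * real m / 2 - real m + 1) / (real m / 2))"
    proof (rule elasticity_bound[where \<sigma> = "sigma_r V E (real m / 2)"])
      fix x assume "is_atom ?H x"
      then obtain A B where AB: "1 \<le> A" "A \<le> m" "A \<le> B + 1" "2 * B \<le> A * (A - 1)"
        "\<forall>t. sigma_r V E t x = t * real A - real B"
        using atomS sg by blast
      have "real (2 * B) \<le> real (A * (A - 1))" using AB(4) by (simp only: of_nat_le_iff)
      then have B2: "2 * real B \<le> real A * (real A - 1)" using AB(1) by (simp add: of_nat_diff)
      have "0 \<le> (real A - 1) * (real m - real A)" using AB by (intro mult_nonneg_nonneg) auto
      then have lo: "real m / 2 \<le> real m / 2 * real A - real B" using B2 by (simp add: algebra_simps)
      have "0 \<le> (real m - 2) * (real m - real A)"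
      proof (cases "A = m")
        case False then have "2 \<le> m" using AB by simp
        then show ?thesis using AB by (intro mult_nonneg_nonneg) auto
      qed simp
      then have hi: "real m / 2 * real A - real B \<le> real m * real m / 2 - real m + 1"
        using AB(3) by (simp add: algebra_simps)
      show "real m / 2 \<le> sigma_r V E (real m / 2) x \<and> sigma_r V E (real m / 2) x \<le> real m * real m / 2 - real m + 1"
        using lo hi AB(5) by simp
    next
      have "0 \<le> (real m - 1) * (real m - 2)"
      proof (cases "m = 1")
        case False then have "2 \<le> m" using m1 by simp
        then show ?thesis by (intro mult_nonneg_nonneg) auto
      qed simp
      then show "real m / 2 \<le> real m * real m / 2 - real m + 1" by (simp add: algebra_simps)
    qed (use mr in \<open>simp_all add: sigma_add sigma_zero\<close>)
    moreover have "(real m * real m / 2 - real m + 1) / (real m / 2) = real m - 2 + 2 / real m"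
      using mr by (simp add: field_simps)
    ultimately show ?thesis by simp
  qed
  show ?thesis using part1 part2 part3 by blast
qed

end
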